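(* Let $0\le a<b$ and let $f:[a,b]\to[a,b]$ be a continuous map, with $[a,b]$ carrying the Euclidean metric. If $f$ has the shadowing property, then the set-valued map $F$ on $X=[-b,-a]\cup[a,b]$ defined by $F(x)=\{f(-x),-f(-x)\}$ for $x\in[-b,-a]$ and $F(x)=\{f(x),-f(x)\}$ for $x\in[a,b]$ also has the shadowing property.
   Context: A single-valued continuous map $f$ on a metric space $(Y,d)$ has the shadowing property if for every $\varepsilon>0$ there is $\delta>0$ such that for every sequence $\{x_n\}_{n\ge0}$ with $d(f(x_n),x_{n+1})<\delta$ for all $n$, there is $x\in Y$ with $d(f^n(x),x_n)<\varepsilon$ for all $n\ge 0$. For a set-valued map $F:X\to 2^X$ ($2^X$ = nonempty compact subsets), a $\delta$-pseudo-orbit is a sequence $\{x_n\}_{n\ge0}$ with $d(x_{n+1},F(x_n))<\delta$ for all $n$, and an $F$-orbit is a sequence $(y_n)_{n\ge0}$ with $y_{n+1}\in F(y_n)$ for all $n$; $F$ has the shadowing property if for every $\varepsilon>0$ there is $\delta>0$ such that for each $\delta$-pseudo-orbit $\{x_n\}$ there is an $F$-orbit $(y_n)$ with $d(x_n,y_n)<\varepsilon$ for all $n$. *)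

theory Defs
  imports "HOL-Analysis.Analysis"
begin

definition shadowing_on :: "'a::metric_space set \<Rightarrow> ('a \<Rightarrow> 'a) \<Rightarrow> bool" where
  "shadowing_on S f \<longleftrightarrow>
     (\<forall>e>0. \<exists>d>0. \<forall>xs::nat \<Rightarrow> 'a. (\<forall>n. xs n \<in> S) \<and> (\<forall>n. dist (f (xs n)) (xs (Suc n)) < d)
        \<longrightarrow> (\<exists>x\<in>S. \<forall>n. dist ((f ^^ n) x) (xs n) < e))"

definition sv_pseudo_orbit :: "'a::metric_space set \<Rightarrow> ('a \<Rightarrow> 'a set) \<Rightarrow> real \<Rightarrow> (nat \<Rightarrow> 'a) \<Rightarrow> bool" where
  "sv_pseudo_orbit X F d xs \<longleftrightarrow> (\<forall>n. xs n \<in> X) \<and> (\<forall>n. infdist (xs (Suc n)) (F (xs n)) < d)"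

definition sv_orbit :: "'a set \<Rightarrow> ('a \<Rightarrow> 'a set) \<Rightarrow> (nat \<Rightarrow> 'a) \<Rightarrow> bool" where
  "sv_orbit X F ys \<longleftrightarrow> (\<forall>n. ys n \<in> X) \<and> (\<forall>n. ys (Suc n) \<in> F (ys n))"

definition sv_shadowing_on :: "'a::metric_space set \<Rightarrow> ('a \<Rightarrow> 'a set) \<Rightarrow> bool" where
  "sv_shadowing_on X F \<longleftrightarrow>
     (\<forall>e>0. \<exists>d>0. \<forall>xs. sv_pseudo_orbit X F d xs \<longrightarrow>
        (\<exists>ys. sv_orbit X F ys \<and> (\<forall>n. dist (xs n) (ys n) < e)))"

end

theory Submission
  imports Defs
begin

lemma F_abs:
  fixes a b y :: real and f :: "real \<Rightarrow> real"
  assumes "0 \<le> a" "y \<in> {-b..-a} \<union> {a..b}"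
  shows "(if y \<in> {-b..-a} then {f (-y), - f (-y)} else {f y, - f y}) = {f \<bar>y\<bar>, - f \<bar>y\<bar>}"
  using assms by auto

lemma infdist_two:
  fixes u p :: real
  assumes "infdist u {p, -p} < d" "0 \<le> p"
  shows "\<bar>\<bar>u\<bar> - p\<bar> < d"
proof -
  obtain z where z: "z \<in> {p, -p}" "infdist u {p, -p} = dist u z"
    using infdist_attains_inf[of "{p,-p}" u] by auto
  then show ?thesis using assms by (auto simp: dist_real_def)
qed

theorem lemma3p17:
  fixes a b :: real and f :: "real \<Rightarrow> real"
  assumes "0 \<le> a" "a < b"
    and "continuous_on {a..b} f"
    and "f ` {a..b} \<subseteq> {a..b}"
    and "shadowing_on {a..b} f"
  shows "sv_shadowing_on ({-b..-a} \<union> {a..b})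
           (\<lambda>x. if x \<in> {-b..-a} then {f (-x), - f (-x)} else {f x, - f x})"
  unfolding sv_shadowing_on_def
proof (intro allI impI)
  fix e :: real assume e: "e > 0"
  from assms(5)[unfolded shadowing_on_def, rule_format, OF e]
  obtain d where d: "d > 0" and sh: "\<And>xs. (\<forall>n. xs n \<in> {a..b}) \<and> (\<forall>n. dist (f (xs n)) (xs (Suc n)) < d)
        \<Longrightarrow> (\<exists>x\<in>{a..b}. \<forall>n. dist ((f ^^ n) x) (xs n) < e)" by blast
  show "\<exists>d>0. \<forall>xs. sv_pseudo_orbit ({-b..-a} \<union> {a..b}) (\<lambda>x. if x \<in> {-b..-a} then {f (-x), - f (-x)} else {f x, - f x}) d xs \<longrightarrow>
        (\<exists>ys. sv_orbit ({-b..-a} \<union> {a..b}) (\<lambda>x. if x \<in> {-b..-a} then {f (-x), - f (-x)} else {f x, - f x}) ys \<and> (\<forall>n. dist (xs n) (ys n) < e))"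
  proof (intro exI[of _ d] conjI allI impI d)
    fix xs assume po: "sv_pseudo_orbit ({-b..-a} \<union> {a..b}) (\<lambda>x. if x \<in> {-b..-a} then {f (-x), - f (-x)} else {f x, - f x}) d xs"
    have X: "xs n \<in> {-b..-a} \<union> {a..b}" for n using po by (simp add: sv_pseudo_orbit_def)
    have absin: "\<bar>xs n\<bar> \<in> {a..b}" for n using X[of n] assms(1) by auto
    have fin: "f \<bar>xs n\<bar> \<in> {a..b}" for n using absin[of n] assms(4) by blast
    have step: "dist (f \<bar>xs n\<bar>) \<bar>xs (Suc n)\<bar> < d" for n
    proof -
      have "infdist (xs (Suc n)) {f \<bar>xs n\<bar>, - f \<bar>xs n\<bar>} < d"
        using po F_abs[OF assms(1) X[of n], of f] unfolding sv_pseudo_orbit_def by metis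
      from infdist_two[OF this] fin[of n] assms(1) show ?thesis
        by (auto simp: dist_real_def)
    qed
    obtain x where x: "x \<in> {a..b}" and cl: "\<And>n. dist ((f ^^ n) x) \<bar>xs n\<bar> < e"
      using sh[of "\<lambda>n. \<bar>xs n\<bar>"] absin step by blast
    have orb: "(f ^^ n) x \<in> {a..b}" for n
      by (induction n) (use x assms(4) in \<open>simp_all add: image_subset_iff\<close>)
    define ys where "ys n = (if xs n \<ge> 0 then (f ^^ n) x else - (f ^^ n) x)" for n
    have ysX: "ys n \<in> {-b..-a} \<union> {a..b}" for n using orb[of n] by (auto simp: ys_def)
    have absys: "\<bar>ys n\<bar> = (f ^^ n) x" for n using orb[of n] assms(1) by (auto simp: ys_def)
    show "\<exists>ys. sv_orbit ({-b..-a} \<union> {a..b}) (\<lambda>x. if x \<in> {-b..-a} then {f (-x), - f (-x)} else {f x, - f x}) ys \<and> (\<forall>n. dist (xs n) (ys n) < e)"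
    proof (intro exI[of _ ys] conjI allI)
      show "sv_orbit ({-b..-a} \<union> {a..b}) (\<lambda>x. if x \<in> {-b..-a} then {f (-x), - f (-x)} else {f x, - f x}) ys"
        unfolding sv_orbit_def
      proof (intro conjI allI)
        fix n
        show "ys n \<in> {-b..-a} \<union> {a..b}" by (rule ysX)
        show "ys (Suc n) \<in> (if ys n \<in> {-b..-a} then {f (-ys n), - f (-ys n)} else {f (ys n), - f (ys n)})"
          unfolding F_abs[OF assms(1) ysX[of n]] absys by (auto simp: ys_def)
      qed
      fix n
      show "dist (xs n) (ys n) < e" using cl[of n] by (auto simp: ys_def dist_real_def)
    qed
  qed
qed

end
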